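(* Let $\delta$ be a metric on $[a,b]$, let $f:[a,b]\to\mathbb{R}^d$ be Borel measurable and let $g:[a,b]\to\mathbb{R}^d$ satisfy $\|g(t)-g(s)\|\le\mathsf{C}_g\,\delta(t,s)$ for all $s,t\in[a,b]$, for some constant $\mathsf{C}_g>0$. Then for every Borel set $E\subseteq[a,b]$, $$\dim_{\rho_\delta}(Gr_E(f+g))=\dim_{\rho_\delta}(Gr_E(f)).$$
   Context: $\rho_\delta((s,x),(t,y)):=\max\{\delta(s,t),\|x-y\|\}$ on $[a,b]\times\mathbb{R}^d$; for a metric $\rho$, $\mathcal{H}^\beta_\rho(G):=\lim_{\eta\to0}\inf\{\sum_n(2r_n)^\beta: G\subseteq\bigcup_n B_\rho(x_n,r_n),\ r_n\le\eta\}$ and $\dim_\rho(G):=\sup\{\beta>0:\mathcal{H}^\beta_\rho(G)>0\}$. $Gr_E(h):=\{(t,h(t)):t\in E\}$. In the paper $\delta$ is the canonical metric of a Gaussian process. *)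

theory Defs
  imports "HOL-Analysis.Analysis"
begin

definition metric_on :: "'a set \<Rightarrow> ('a \<Rightarrow> 'a \<Rightarrow> real) \<Rightarrow> bool" where
  "metric_on S \<delta> \<longleftrightarrow>
     (\<forall>s\<in>S. \<forall>t\<in>S. 0 \<le> \<delta> s t \<and> (\<delta> s t = 0 \<longleftrightarrow> s = t) \<and> \<delta> s t = \<delta> t s) \<and>
     (\<forall>s\<in>S. \<forall>t\<in>S. \<forall>u\<in>S. \<delta> s u \<le> \<delta> s t + \<delta> t u)"

definition rho_delta :: "(real \<Rightarrow> real \<Rightarrow> real) \<Rightarrow> real \<times> 'v::real_normed_vector \<Rightarrow> real \<times> 'v \<Rightarrow> real" where
  "rho_delta \<delta> p q = max (\<delta> (fst p) (fst q)) (norm (snd p - snd q))"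

definition rball :: "('a \<Rightarrow> 'a \<Rightarrow> real) \<Rightarrow> 'a \<Rightarrow> real \<Rightarrow> 'a set" where
  "rball \<rho> x r = {y. \<rho> x y < r}"

text \<open>The inner infimum is nonincreasing in eta, so the limit eta -> 0+ is the supremum over eta > 0.\<close>
definition hausdorff_measure ::
  "'a set \<Rightarrow> ('a \<Rightarrow> 'a \<Rightarrow> real) \<Rightarrow> real \<Rightarrow> 'a set \<Rightarrow> ennreal" where
  "hausdorff_measure X \<rho> \<beta> G =
     (SUP \<eta>\<in>{0<..}. INF c\<in>{(x, r). (\<forall>n. x n \<in> X \<and> 0 \<le> r n \<and> r n \<le> \<eta>) \<and>
                                     G \<subseteq> (\<Union>n. rball \<rho> (x n) (r n))}.
            (\<Sum>n. ennreal ((2 * snd c n) powr \<beta>)))"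

definition hausdorff_dim :: "'a set \<Rightarrow> ('a \<Rightarrow> 'a \<Rightarrow> real) \<Rightarrow> 'a set \<Rightarrow> ereal" where
  "hausdorff_dim X \<rho> G = Sup (ereal ` {\<beta>. \<beta> > 0 \<and> hausdorff_measure X \<rho> \<beta> G > 0})"

definition graph_on :: "'a set \<Rightarrow> ('a \<Rightarrow> 'b) \<Rightarrow> ('a \<times> 'b) set" where
  "graph_on E h = {(t, h t) | t. t \<in> E}"

end

theory Submission
  imports Defs
begin

lemma hm_lip:
  fixes \<Phi> :: "'a \<Rightarrow> 'a"
  assumes lip: "\<forall>p\<in>X. \<forall>q\<in>X. \<rho> (\<Phi> p) (\<Phi> q) \<le> L * \<rho> p q"
    and img: "\<Phi> ` X \<subseteq> X" and GX: "G \<subseteq> X" and L: "L > 0"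
  shows "hausdorff_measure X \<rho> \<beta> (\<Phi> ` G) \<le> ennreal (L powr \<beta>) * hausdorff_measure X \<rho> \<beta> G"
proof -
  define c where "c = L powr \<beta>"
  have c: "c > 0" using L by (simp add: c_def)
  define I where "I S \<eta> = (INF c\<in>{(x, r). (\<forall>n. x n \<in> X \<and> 0 \<le> r n \<and> r n \<le> \<eta>) \<and>
                                     S \<subseteq> (\<Union>n. rball \<rho> (x n) (r n))}.
            (\<Sum>n. ennreal ((2 * snd c n) powr \<beta>)))" for S \<eta>
  have H: "hausdorff_measure X \<rho> \<beta> S = (SUP \<eta>\<in>{0<..}. I S \<eta>)" for S
    unfolding hausdorff_measure_def I_def by simp
  have key: "I (\<Phi> ` G) \<eta> * ennreal (1 / c) \<le> I G (\<eta> / L)" if "\<eta> > 0" for \<eta>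
    unfolding I_def[of G "\<eta> / L"]
  proof (rule INF_greatest)
    fix cv :: "(nat \<Rightarrow> 'a) \<times> (nat \<Rightarrow> real)" assume "cv \<in> {(x, r). (\<forall>n. x n \<in> X \<and> 0 \<le> r n \<and> r n \<le> \<eta> / L) \<and>
                                     G \<subseteq> (\<Union>n. rball \<rho> (x n) (r n))}"
    then obtain x :: "nat \<Rightarrow> 'a" and r :: "nat \<Rightarrow> real" where cv: "cv = (x, r)" and xr: "\<forall>n. x n \<in> X \<and> 0 \<le> r n \<and> r n \<le> \<eta> / L"
      and cov: "G \<subseteq> (\<Union>n. rball \<rho> (x n) (r n))" by blast
    have mem: "(\<Phi> \<circ> x, \<lambda>n. L * r n) \<in> {(x, r). (\<forall>n. x n \<in> X \<and> 0 \<le> r n \<and> r n \<le> \<eta>) \<and>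
                                     \<Phi> ` G \<subseteq> (\<Union>n. rball \<rho> (x n) (r n))}"
    proof -
      have "\<forall>n. (\<Phi> \<circ> x) n \<in> X \<and> 0 \<le> L * r n \<and> L * r n \<le> \<eta>"
      proof
        fix n
        have "L * r n \<le> L * (\<eta> / L)" using xr L by (intro mult_left_mono) auto
        then show "(\<Phi> \<circ> x) n \<in> X \<and> 0 \<le> L * r n \<and> L * r n \<le> \<eta>"
          using xr L img by auto
      qed
      moreover have "\<Phi> ` G \<subseteq> (\<Union>n. rball \<rho> ((\<Phi> \<circ> x) n) (L * r n))"
      proof
        fix z assume "z \<in> \<Phi> ` G"
        then obtain y where y: "y \<in> G" "z = \<Phi> y" by auto
        then obtain n where "\<rho> (x n) y < r n" using cov by (auto simp: rball_def)
        moreover have "\<rho> (\<Phi> (x n)) (\<Phi> y) \<le> L * \<rho> (x n) y"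
          using lip xr y GX by auto
        moreover have "L * \<rho> (x n) y < L * r n" using L calculation(1) by simp
        ultimately show "z \<in> (\<Union>n. rball \<rho> ((\<Phi> \<circ> x) n) (L * r n))"
          using y by (auto simp: rball_def intro!: exI[of _ n])
      qed
      ultimately show ?thesis by simp
    qed
    have eq: "(\<Sum>n. ennreal ((2 * (L * r n)) powr \<beta>)) = ennreal c * (\<Sum>n. ennreal ((2 * r n) powr \<beta>))"
    proof -
      have "ennreal ((2 * (L * r n)) powr \<beta>) = ennreal c * ennreal ((2 * r n) powr \<beta>)" for n
      proof -
        have "(2 * (L * r n)) powr \<beta> = c * (2 * r n) powr \<beta>"
          using L xr unfolding c_def
          by (metis (no_types, lifting) mult.left_commute less_eq_real_def powr_mult zero_le_mult_iff zero_le_numeral)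
        then show ?thesis using c by (simp add: ennreal_mult)
      qed
      then show ?thesis by simp
    qed
    have "I (\<Phi> ` G) \<eta> \<le> (\<Sum>n. ennreal ((2 * (L * r n)) powr \<beta>))"
      unfolding I_def by (rule INF_lower2[OF mem]) simp
    then have "I (\<Phi> ` G) \<eta> * ennreal (1 / c) \<le> ennreal c * (\<Sum>n. ennreal ((2 * r n) powr \<beta>)) * ennreal (1 / c)"
      using eq by (auto intro: mult_right_mono)
    also have "\<dots> = (\<Sum>n. ennreal ((2 * r n) powr \<beta>))"
    proof -
      have "ennreal c * ennreal (1 / c) = 1" using c
        by (metis ennreal_1 ennreal_mult less_eq_real_def nonzero_mult_div_cancel_left times_divide_eq_right zero_le_divide_1_iff mult.right_neutral less_irrefl)
      then show ?thesis by (metis mult.commute mult.left_commute mult.right_neutral)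
    qed
    finally show "I (\<Phi> ` G) \<eta> * ennreal (1 / c) \<le> (\<Sum>n. ennreal ((2 * snd cv n) powr \<beta>))"
      using cv by simp
  qed
  have "I (\<Phi> ` G) \<eta> \<le> ennreal c * hausdorff_measure X \<rho> \<beta> G" if "\<eta> > 0" for \<eta>
  proof -
    have "I (\<Phi> ` G) \<eta> = I (\<Phi> ` G) \<eta> * ennreal (1 / c) * ennreal c"
    proof -
      have "ennreal (1 / c) * ennreal c = 1" using c
        by (metis ennreal_1 ennreal_mult less_eq_real_def divide_self_if  times_divide_eq_left mult_1 zero_le_divide_1_iff less_irrefl)
      then show ?thesis by (metis mult.assoc mult.right_neutral)
    qed
    also have "\<dots> \<le> I G (\<eta> / L) * ennreal c"
      using key[OF that] by (intro mult_right_mono) auto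
    also have "\<dots> \<le> hausdorff_measure X \<rho> \<beta> G * ennreal c"
      unfolding H using that L by (intro mult_right_mono SUP_upper) auto
    finally show ?thesis by (simp add: mult.commute)
  qed
  then show ?thesis unfolding H[of "\<Phi> ` G"] c_def[symmetric] by (intro SUP_least) auto
qed



lemma dim_mono:
  assumes "\<And>\<beta>. hausdorff_measure X \<rho> \<beta> A > 0 \<Longrightarrow> hausdorff_measure X \<rho> \<beta> B > 0"
  shows "hausdorff_dim X \<rho> A \<le> hausdorff_dim X \<rho> B"
  unfolding hausdorff_dim_def using assms
  by (intro Sup_subset_mono image_mono) auto

lemma graph_shift:
  fixes \<delta> :: "real \<Rightarrow> real \<Rightarrow> real" and f h :: "real \<Rightarrow> 'v::real_normed_vector"
  assumes met: "metric_on {a..b} \<delta>" and C: "C > 0"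
    and hl: "\<forall>s\<in>{a..b}. \<forall>t\<in>{a..b}. norm (h t - h s) \<le> C * \<delta> t s"
    and E: "E \<subseteq> {a..b}"
  shows "hausdorff_dim ({a..b} \<times> UNIV) (rho_delta \<delta>) (graph_on E (\<lambda>t. f t + h t))
         \<le> hausdorff_dim ({a..b} \<times> UNIV) (rho_delta \<delta>) (graph_on E f)"
proof (rule dim_mono)
  fix \<beta>
  define \<Phi> where "\<Phi> = (\<lambda>(t::real, x::'v). (t, x + h t))"
  define X where "X = {a..b} \<times> (UNIV :: 'v set)"
  have img: "graph_on E (\<lambda>t. f t + h t) = \<Phi> ` graph_on E f"
    unfolding graph_on_def \<Phi>_def by auto
  have lip: "\<forall>p\<in>X. \<forall>q\<in>X. rho_delta \<delta> (\<Phi> p) (\<Phi> q) \<le> (1 + C) * rho_delta \<delta> p q"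
  proof (intro ballI)
    fix p q assume p: "p \<in> X" and q: "q \<in> X"
    obtain s x where ps: "p = (s, x)" by (cases p)
    obtain t y where qt: "q = (t, y)" by (cases q)
    have st: "s \<in> {a..b}" "t \<in> {a..b}" using p q ps qt X_def by auto
    have d0: "\<delta> s t \<ge> 0" using met st unfolding metric_on_def by blast
    define M where "M = max (\<delta> s t) (norm (x - y))"
    have M0: "M \<ge> 0" using d0 M_def by simp
    have hst: "norm (h s - h t) \<le> C * \<delta> s t" using hl st by blast
    have "norm (x + h s - (y + h t)) \<le> norm (x - y) + norm (h s - h t)"
      by (metis add_diff_add norm_triangle_ineq)
    also have "\<dots> \<le> M + C * M"
      using hst C d0 M_def by (smt (verit, best) max.cobounded1 max.cobounded2 mult_left_mono)
    finally have n1: "norm (x + h s - (y + h t)) \<le> (1 + C) * M" by (simp add: algebra_simps)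
    have "\<delta> s t \<le> M" using M_def by simp
    moreover have "0 \<le> C * M" using M0 C by simp
    ultimately have n2: "\<delta> s t \<le> (1 + C) * M" by (simp add: algebra_simps)
    show "rho_delta \<delta> (\<Phi> p) (\<Phi> q) \<le> (1 + C) * rho_delta \<delta> p q"
      using n1 n2 unfolding rho_delta_def \<Phi>_def ps qt M_def by simp
  qed
  have imX: "\<Phi> ` X \<subseteq> X" unfolding \<Phi>_def X_def by auto
  have GX: "graph_on E f \<subseteq> X" unfolding graph_on_def X_def using E by auto
  have le: "hausdorff_measure X (rho_delta \<delta>) \<beta> (\<Phi> ` graph_on E f)
      \<le> ennreal ((1 + C) powr \<beta>) * hausdorff_measure X (rho_delta \<delta>) \<beta> (graph_on E f)"
    by (rule hm_lip[OF lip imX GX]) (use C in simp)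
  assume "hausdorff_measure ({a..b} \<times> UNIV) (rho_delta \<delta>) \<beta> (graph_on E (\<lambda>t. f t + h t)) > 0"
  then have "ennreal ((1 + C) powr \<beta>) * hausdorff_measure X (rho_delta \<delta>) \<beta> (graph_on E f) > 0"
    using le img X_def by (metis order_less_le_trans)
  then show "hausdorff_measure ({a..b} \<times> UNIV) (rho_delta \<delta>) \<beta> (graph_on E f) > 0"
    using X_def by (metis mult_zero_right not_gr_zero)
qed

theorem lemma3p8:
  fixes a b :: real and \<delta> :: "real \<Rightarrow> real \<Rightarrow> real"
    and f g :: "real \<Rightarrow> 'v::euclidean_space" and C :: real and E :: "real set"
  assumes "metric_on {a..b} \<delta>"
    and "f \<in> borel_measurable (restrict_space borel {a..b})"
    and "C > 0"
    and "\<forall>s\<in>{a..b}. \<forall>t\<in>{a..b}. norm (g t - g s) \<le> C * \<delta> t s"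
    and "E \<in> sets borel" and "E \<subseteq> {a..b}"
  shows "hausdorff_dim ({a..b} \<times> UNIV) (rho_delta \<delta>) (graph_on E (\<lambda>t. f t + g t))
         = hausdorff_dim ({a..b} \<times> UNIV) (rho_delta \<delta>) (graph_on E f)"
proof (rule antisym)
  show "hausdorff_dim ({a..b} \<times> UNIV) (rho_delta \<delta>) (graph_on E (\<lambda>t. f t + g t))
         \<le> hausdorff_dim ({a..b} \<times> UNIV) (rho_delta \<delta>) (graph_on E f)"
    by (rule graph_shift[OF assms(1,3,4,6)])
  have ng: "\<forall>s\<in>{a..b}. \<forall>t\<in>{a..b}. norm ((- g t) - (- g s)) \<le> C * \<delta> t s"
    using assms(4) by (metis minus_diff_eq minus_diff_minus norm_minus_commute)
  have "hausdorff_dim ({a..b} \<times> UNIV) (rho_delta \<delta>) (graph_on E (\<lambda>t. (f t + g t) + - g t))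
         \<le> hausdorff_dim ({a..b} \<times> UNIV) (rho_delta \<delta>) (graph_on E (\<lambda>t. f t + g t))"
    by (rule graph_shift[OF assms(1,3) ng assms(6)])
  then show "hausdorff_dim ({a..b} \<times> UNIV) (rho_delta \<delta>) (graph_on E f)
         \<le> hausdorff_dim ({a..b} \<times> UNIV) (rho_delta \<delta>) (graph_on E (\<lambda>t. f t + g t))"
    by simp
qed

end
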